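(* A measure $\mu$ on $\mathbb Z$ is a doubling minimizer if and only if it is constant.
   Context: $\mathbb Z$ is regarded as the infinite path graph with edges $\{j,j+1\}$ and distance $d(i,j)=|i-j|$. A measure $\mu$ is a weight function $\mu:\mathbb Z\to(0,\infty)$, with $\mu(A)=\sum_{v\in A}\mu(v)$. Closed balls are $B(x,r)=\{y:|x-y|\le r\}$. The doubling constant is $C_\mu=\sup\{\mu(B(x,2k+1))/\mu(B(x,k)): x\in \mathbb Z,\ k\in\{0,1,2,\dots\}\}$; $\mu$ is doubling if $C_\mu<\infty$; $C_{\mathbb Z}=\inf\{C_\mu:\mu\text{ doubling}\}$. A doubling minimizer is a doubling measure $\mu$ with $C_\mu=C_{\mathbb Z}$. *)

theory Defs
  imports "HOL-Analysis.Analysis"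
begin

definition is_measure :: "(int \<Rightarrow> real) \<Rightarrow> bool" where
  "is_measure \<mu> \<longleftrightarrow> (\<forall>v. \<mu> v > 0)"

definition ball_Z :: "int \<Rightarrow> nat \<Rightarrow> int set" where
  "ball_Z x r = {y. \<bar>x - y\<bar> \<le> int r}"

definition meas :: "(int \<Rightarrow> real) \<Rightarrow> int set \<Rightarrow> real" where
  "meas \<mu> A = (\<Sum>v\<in>A. \<mu> v)"

definition doubling_const :: "(int \<Rightarrow> real) \<Rightarrow> ereal" where
  "doubling_const \<mu> =
     (SUP p \<in> (UNIV :: (int \<times> nat) set).
        ereal (meas \<mu> (ball_Z (fst p) (2 * snd p + 1)) / meas \<mu> (ball_Z (fst p) (snd p))))"

definition doubling :: "(int \<Rightarrow> real) \<Rightarrow> bool" where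
  "doubling \<mu> \<longleftrightarrow> is_measure \<mu> \<and> doubling_const \<mu> < \<infinity>"

definition C_Z :: ereal where
  "C_Z = (INF \<mu> \<in> {\<mu>. doubling \<mu>}. doubling_const \<mu>)"

definition doubling_minimizer :: "(int \<Rightarrow> real) \<Rightarrow> bool" where
  "doubling_minimizer \<mu> \<longleftrightarrow> doubling \<mu> \<and> doubling_const \<mu> = C_Z"

end

theory Submission
  imports Defs
begin

lemma ball0: "ball_Z x 0 = {x}"
  unfolding ball_Z_def by auto

lemma ball1: "ball_Z x 1 = {x-1, x, x+1}"
  unfolding ball_Z_def by auto

lemma ball_eq: "ball_Z x r = {x - int r .. x + int r}"
  unfolding ball_Z_def by auto

lemma meas_const: "meas (\<lambda>_. c) (ball_Z x r) = c * (2 * real r + 1)"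
proof -
  have "card (ball_Z x r) = 2 * r + 1" unfolding ball_eq by simp
  then show ?thesis unfolding meas_def by simp
qed

lemma concave_const:
  fixes \<mu> :: "int \<Rightarrow> real"
  assumes pos: "\<And>x. \<mu> x > 0"
    and conc: "\<And>x. \<mu> (x-1) + \<mu> (x+1) \<le> 2 * \<mu> x"
  shows "\<mu> x = \<mu> 0"
proof -
  define d where "d x = \<mu> (x+1) - \<mu> x" for x
  have dstep: "d x \<le> d (x-1)" for x using conc[of x] unfolding d_def by simp
  have dmono_up: "d (x0 + int n) \<le> d x0" for x0 n
  proof (induction n)
    case 0 then show ?case by simp
  next
    case (Suc n)
    have "d (x0 + int (Suc n)) \<le> d (x0 + int n)" using dstep[of "x0 + int (Suc n)"] by simp
    then show ?case using Suc by simp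
  qed
  have dzero: "d x0 = 0" for x0
  proof (rule ccontr)
    assume ne: "d x0 \<noteq> 0"
    show False
    proof (cases "d x0 < 0")
      case True
      have up: "\<mu> (x0 + int n) \<le> \<mu> x0 + real n * d x0" for n
      proof (induction n)
        case 0 then show ?case by simp
      next
        case (Suc n)
        have "\<mu> (x0 + int (Suc n)) = \<mu> (x0 + int n) + d (x0 + int n)"
          unfolding d_def by (simp add: algebra_simps)
        also have "\<dots> \<le> \<mu> x0 + real n * d x0 + d x0" using Suc dmono_up[of x0 n] by simp
        finally show ?case by (simp add: algebra_simps)
      qed
      obtain n :: nat where n: "real n > \<mu> x0 / (- d x0)" using reals_Archimedean2 by blast
      have "real n * (- d x0) > \<mu> x0" using n True by (simp add: field_simps)
      then have "\<mu> (x0 + int n) < 0" using up[of n] by (simp add: algebra_simps)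
      then show False using pos[of "x0 + int n"] by simp
    next
      case False
      then have dp: "d x0 > 0" using ne by simp
      have dm: "d (x0 - int n) \<ge> d x0" for n
        using dmono_up[of "x0 - int n" n] by simp
      have down: "\<mu> (x0 - int n) \<le> \<mu> x0 - real n * d x0" for n
      proof (induction n)
        case 0 then show ?case by simp
      next
        case (Suc n)
        have "\<mu> (x0 - int (Suc n)) = \<mu> (x0 - int n) - d (x0 - int (Suc n))"
          unfolding d_def by simp
        also have "\<dots> \<le> \<mu> x0 - real n * d x0 - d x0" using Suc dm[of "Suc n"] by simp
        finally show ?case by (simp add: algebra_simps)
      qed
      obtain n :: nat where n: "real n > \<mu> x0 / d x0" using reals_Archimedean2 by blast
      have "real n * d x0 > \<mu> x0" using n dp by (simp add: field_simps)
      then have "\<mu> (x0 - int n) < 0" using down[of n] by (simp add: algebra_simps)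
      then show False using pos[of "x0 - int n"] by simp
    qed
  qed
  have step: "\<mu> (x+1) = \<mu> x" for x using dzero[of x] unfolding d_def by simp
  have nn: "\<mu> (int n) = \<mu> 0" for n by (induction n) (auto simp: step add.commute[of 1])
  have nn2: "\<mu> (- int n) = \<mu> 0" for n
  proof (induction n)
    case 0 then show ?case by simp
  next
    case (Suc n)
    have "\<mu> (- int (Suc n)) = \<mu> (- int (Suc n) + 1)" using step[of "- int (Suc n)"] by simp
    also have "- int (Suc n) + 1 = - int n" by simp
    finally show ?case using Suc by simp
  qed
  show ?thesis
  proof (cases "x \<ge> 0")
    case True then show ?thesis using nn[of "nat x"] by simp
  next
    case False then show ?thesis using nn2[of "nat (-x)"] by simp
  qed
qed

lemma term_le: "ereal (meas \<mu> (ball_Z x (2 * k + 1)) / meas \<mu> (ball_Z x k)) \<le> doubling_const \<mu>"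
  unfolding doubling_const_def
  by (rule SUP_upper2[of "(x,k)"]) auto

lemma le3_const:
  assumes m: "is_measure \<mu>" and le: "doubling_const \<mu> \<le> 3"
  shows "\<mu> x = \<mu> 0"
proof (rule concave_const)
  show "\<mu> x > 0" for x using m unfolding is_measure_def by auto
  fix x
  have "ereal (meas \<mu> (ball_Z x (2*0+1)) / meas \<mu> (ball_Z x 0)) \<le> ereal 3"
    using order_trans[OF term_le[of \<mu> x 0] le] by simp
  then have "meas \<mu> (ball_Z x 1) / meas \<mu> (ball_Z x 0) \<le> 3" by (simp only: ereal_less_eq) simp
  moreover have "meas \<mu> (ball_Z x 1) = \<mu> (x-1) + \<mu> x + \<mu> (x+1)"
    unfolding ball1 meas_def by simp
  moreover have "meas \<mu> (ball_Z x 0) = \<mu> x" unfolding ball0 meas_def by simp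
  moreover have "\<mu> x > 0" using m unfolding is_measure_def by auto
  ultimately show "\<mu> (x-1) + \<mu> (x+1) \<le> 2 * \<mu> x" by (simp add: field_simps)
qed

lemma const_dc:
  assumes c: "c > 0"
  shows "doubling_const (\<lambda>_. c) = 3"
proof (rule antisym)
  show "doubling_const (\<lambda>_. c) \<le> 3"
    unfolding doubling_const_def
  proof (rule SUP_least)
    fix p :: "int \<times> nat"
    have dp: "c * (2 * real (snd p) + 1) > 0" using c by simp
    have "(c * (2 * real (2 * snd p + 1) + 1)) \<le> 3 * (c * (2 * real (snd p) + 1))"
      using c by (simp add: algebra_simps)
    then have "(c * (2 * real (2 * snd p + 1) + 1)) / (c * (2 * real (snd p) + 1)) \<le> 3"
      using dp by (simp add: divide_le_eq)
    then show "ereal (meas (\<lambda>_. c) (ball_Z (fst p) (2 * snd p + 1)) / meas (\<lambda>_. c) (ball_Z (fst p) (snd p))) \<le> 3"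
      unfolding meas_const by simp
  qed
  have "ereal (meas (\<lambda>_. c) (ball_Z 0 (2 * 0 + 1)) / meas (\<lambda>_. c) (ball_Z 0 0)) \<le> doubling_const (\<lambda>_. c)"
    by (rule term_le)
  then show "3 \<le> doubling_const (\<lambda>_. c)" unfolding meas_const using c by simp
qed

lemma dc_ge3:
  assumes m: "is_measure \<mu>"
  shows "doubling_const \<mu> \<ge> 3"
proof (rule ccontr)
  assume "\<not> doubling_const \<mu> \<ge> 3"
  then have lt: "doubling_const \<mu> \<le> 3" by (simp add: not_le less_imp_le)
  have "\<mu> x = \<mu> 0" for x using le3_const[OF m lt] .
  then have e: "\<mu> = (\<lambda>_. \<mu> 0)" by (rule ext)
  have "\<mu> 0 > 0" using m unfolding is_measure_def by blast
  then have "doubling_const (\<lambda>_. \<mu> 0) = 3" by (rule const_dc)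
  then have "doubling_const \<mu> = 3" using e by metis
  then show False using \<open>\<not> doubling_const \<mu> \<ge> 3\<close> by simp
qed

lemma CZ: "C_Z = 3"
proof -
  have d1: "doubling (\<lambda>_. 1)" unfolding doubling_def is_measure_def
    using const_dc[of 1] by simp
  show ?thesis unfolding C_Z_def
  proof (rule antisym)
    have "(INF \<mu> \<in> {\<mu>. doubling \<mu>}. doubling_const \<mu>) \<le> doubling_const (\<lambda>_. 1)"
      by (rule INF_lower) (use d1 in blast)
    then show "(INF \<mu> \<in> {\<mu>. doubling \<mu>}. doubling_const \<mu>) \<le> 3"
      using const_dc[of 1] by simp
    show "3 \<le> (INF \<mu> \<in> {\<mu>. doubling \<mu>}. doubling_const \<mu>)"
    proof (rule INF_greatest)
      fix \<mu> :: "int \<Rightarrow> real" assume "\<mu> \<in> {\<mu>. doubling \<mu>}"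
      then have "is_measure \<mu>" by (simp add: doubling_def)
      then show "3 \<le> doubling_const \<mu>" by (rule dc_ge3)
    qed
  qed
qed

theorem theorem4p6:
  fixes \<mu> :: "int \<Rightarrow> real"
  assumes "is_measure \<mu>"
  shows "doubling_minimizer \<mu> \<longleftrightarrow> (\<exists>c. \<forall>x. \<mu> x = c)"
proof
  assume "doubling_minimizer \<mu>"
  then have "doubling_const \<mu> \<le> 3" unfolding doubling_minimizer_def CZ by simp
  then show "\<exists>c. \<forall>x. \<mu> x = c" using le3_const[OF assms] by blast
next
  assume "\<exists>c. \<forall>x. \<mu> x = c"
  then obtain c where e: "\<mu> = (\<lambda>_. c)" by auto
  have "c > 0" using assms unfolding e is_measure_def by simp
  then have "doubling_const \<mu> = 3" unfolding e by (rule const_dc)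
  then show "doubling_minimizer \<mu>"
    unfolding doubling_minimizer_def doubling_def CZ using assms by simp
qed

end
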